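(* Let $V$ be a finite-dimensional complex vector space and let $c_1,c_2\in\wedge^2V$ be such that $c_\lambda=\lambda_1c_1+\lambda_2c_2$ is nondegenerate for generic $\lambda\in\mathbb C^2$. Let $K\subset V$ be a subspace, let $p:V\to V'=V/K$ be the projection, and assume that $c_i'=\wedge^2p(c_i)$, $i=1,2$, are linearly independent. Set $c'_\lambda=\lambda_1c'_1+\lambda_2c'_2$, $R_0'=\max_\lambda\operatorname{rank}c'_\lambda$, and $$d_\lambda=\dim\ c_\lambda^\sharp(K^\perp)\big/\bigl(K\cap c_\lambda^\sharp(K^\perp)\bigr).$$ Then $\operatorname{rank}c'_\lambda=R_0'$ for all $\lambda\in\mathbb C^2\setminus\{0\}$ if and only if $d_\lambda$ is independent of $\lambda\in\mathbb C^2\setminus\{0\}$.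
   Context: $K^\perp\subset V^*$ denotes the annihilator of $K$. For $b\in\wedge^2V$, $b^\sharp:V^*\to V$ is contraction in the first argument, and $\operatorname{rank}b=\dim\operatorname{im}b^\sharp$. *)

theory Defs
  imports "HOL-Analysis.Analysis"
begin

text \<open>V is modelled as complex^'n (standard basis e_i); V* is modelled
  as complex^'n via the dual basis, with the natural (non-conjugated) pairing.
  An element b of the second exterior power of V is modelled by its coefficient
  matrix B (skew-symmetric), b = sum_{i,j} B_ij e_i (x) e_j.  Contraction in the
  first argument is then b^sharp(xi) = sum_{i,j} xi_i B_ij e_j, i.e. xi v* B.\<close>

definition pairing :: "complex^'n \<Rightarrow> complex^'n \<Rightarrow> complex" where
  "pairing xi v = (\<Sum>i\<in>UNIV. xi $ i * v $ i)"

definition is_bivector :: "complex^'n^'n \<Rightarrow> bool" where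
  "is_bivector B \<longleftrightarrow> transpose B = - B"

definition sharp :: "complex^'n^'n \<Rightarrow> complex^'n \<Rightarrow> complex^'n" where
  "sharp B xi = xi v* B"

definition bv_rank :: "complex^'n^'n \<Rightarrow> nat" where
  "bv_rank B = vec.dim (range (sharp B))"

definition nondegenerate :: "complex^'n^'n \<Rightarrow> bool" where
  "nondegenerate B \<longleftrightarrow> bij (sharp B)"

definition pencil :: "complex \<Rightarrow> complex \<Rightarrow> complex^'n^'n \<Rightarrow> complex^'n^'n \<Rightarrow> complex^'n^'n" where
  "pencil l1 l2 C1 C2 = (\<chi> i j. l1 * C1 $ i $ j + l2 * C2 $ i $ j)"

definition annih :: "(complex^'n) set \<Rightarrow> (complex^'n) set" where
  "annih K = {xi. \<forall>v\<in>K. pairing xi v = 0}"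

text \<open>Quotient V' = V/K.  Its dual (V')* is identified with K^perp via p*, and
  the bivector wedge^2 p (c) has sharp map (V')* -> V', xi |-> p(c^sharp xi).
  Hence its image is p(c^sharp(K^perp)); a subspace of V/K is represented by its
  preimage under p, whose dimension exceeds that of the subspace by dim K.\<close>
definition quot_image_preimage :: "(complex^'n) set \<Rightarrow> complex^'n^'n \<Rightarrow> (complex^'n) set" where
  "quot_image_preimage K B = {x + k | x k. x \<in> sharp B ` annih K \<and> k \<in> K}"

text \<open>rank of wedge^2 p (c) = dim of p(c^sharp(K^perp)) in V/K\<close>
definition quot_rank :: "(complex^'n) set \<Rightarrow> complex^'n^'n \<Rightarrow> nat" where
  "quot_rank K B = vec.dim (quot_image_preimage K B) - vec.dim K"

text \<open>wedge^2 p (c) = 0 iff its sharp map vanishes iff c^sharp(K^perp) is contained in K.\<close>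
definition quot_zero :: "(complex^'n) set \<Rightarrow> complex^'n^'n \<Rightarrow> bool" where
  "quot_zero K B \<longleftrightarrow> sharp B ` annih K \<subseteq> K"

text \<open>linear independence of c_1', c_2' (note wedge^2 p is linear, so
  l1 c_1' + l2 c_2' = wedge^2 p (c_lambda))\<close>
definition quot_lin_indep :: "(complex^'n) set \<Rightarrow> complex^'n^'n \<Rightarrow> complex^'n^'n \<Rightarrow> bool" where
  "quot_lin_indep K C1 C2 \<longleftrightarrow>
     (\<forall>l1 l2. quot_zero K (pencil l1 l2 C1 C2) \<longrightarrow> l1 = 0 \<and> l2 = 0)"

definition d_dim :: "(complex^'n) set \<Rightarrow> complex^'n^'n \<Rightarrow> nat" where
  "d_dim K B = vec.dim (sharp B ` annih K) - vec.dim (K \<inter> sharp B ` annih K)"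

end

theory Submission
  imports Defs
begin

lemma annih_subspace: "vec.subspace (annih K)"
  unfolding vec.subspace_def annih_def pairing_def
proof (intro conjI ballI allI impI; simp only: mem_Collect_eq)
  show "\<forall>v\<in>K. (\<Sum>i\<in>UNIV. (0::complex^'a) $ i * v $ i) = 0" by simp
next
  fix x y :: "complex^'a"
  assume x: "\<forall>v\<in>K. (\<Sum>i\<in>UNIV. x $ i * v $ i) = 0" and y: "\<forall>v\<in>K. (\<Sum>i\<in>UNIV. y $ i * v $ i) = 0"
  show "\<forall>v\<in>K. (\<Sum>i\<in>UNIV. (x + y) $ i * v $ i) = 0"
  proof
    fix v assume "v \<in> K"
    have "(\<Sum>i\<in>UNIV. (x + y) $ i * v $ i) = (\<Sum>i\<in>UNIV. x $ i * v $ i) + (\<Sum>i\<in>UNIV. y $ i * v $ i)"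
      by (simp add: distrib_right sum.distrib)
    thus "(\<Sum>i\<in>UNIV. (x + y) $ i * v $ i) = 0" using x y \<open>v \<in> K\<close> by simp
  qed
next
  fix c :: complex and x :: "complex^'a"
  assume x: "\<forall>v\<in>K. (\<Sum>i\<in>UNIV. x $ i * v $ i) = 0"
  show "\<forall>v\<in>K. (\<Sum>i\<in>UNIV. (c *s x) $ i * v $ i) = 0"
  proof
    fix v assume "v \<in> K"
    have "(\<Sum>i\<in>UNIV. (c *s x) $ i * v $ i) = c * (\<Sum>i\<in>UNIV. x $ i * v $ i)"
      by (simp add: sum_distrib_left mult.assoc)
    thus "(\<Sum>i\<in>UNIV. (c *s x) $ i * v $ i) = 0" using x \<open>v \<in> K\<close> by simp
  qed
qed

lemma sharp_eq: "sharp B = (\<lambda>xi. transpose B *v xi)"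
  by (rule ext) (simp add: sharp_def)

lemma sharp_img_subspace: "vec.subspace (sharp B ` annih K)"
  unfolding sharp_eq
  by (rule vec.subspace_image[OF annih_subspace])

lemma quot_rank_eq:
  assumes "vec.subspace K"
  shows "quot_rank K B = d_dim K B"
proof -
  let ?W = "sharp B ` annih K"
  have "vec.dim (quot_image_preimage K B) + vec.dim (?W \<inter> K) = vec.dim ?W + vec.dim K"
    unfolding quot_image_preimage_def
    by (rule vec.dim_sums_Int[OF sharp_img_subspace assms])
  moreover have "vec.dim (?W \<inter> K) \<le> vec.dim ?W"
    by (rule vec.dim_subset) auto
  ultimately show ?thesis unfolding quot_rank_def d_dim_def
    by (simp add: Int_commute)
qed

lemma d_dim_zero: "d_dim K (pencil 0 0 C1 C2) = 0"
proof -
  have "pencil 0 0 C1 C2 = 0" by (simp add: pencil_def vec_eq_iff)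
  hence "sharp (pencil 0 0 C1 C2) ` annih K = {0}"
  proof -
    have z: "(0::complex^'a) \<in> annih K" using annih_subspace[of K] vec.subspace_0 by blast
    have "sharp (pencil 0 0 C1 C2) x = 0" for x
      using \<open>pencil 0 0 C1 C2 = 0\<close> by (simp add: sharp_def vector_matrix_mult_def vec_eq_iff)
    thus ?thesis using z by (auto simp: image_iff)
  qed
  thus ?thesis unfolding d_dim_def by simp
qed

theorem mainTheorem5:
  fixes C1 C2 :: "complex^'n^'n" and K :: "(complex^'n) set"
  assumes "is_bivector C1" and "is_bivector C2"
    and "\<exists>l1 l2. nondegenerate (pencil l1 l2 C1 C2)"
    and "vec.subspace K"
    and "quot_lin_indep K C1 C2"
  shows "(\<forall>l1 l2. (l1, l2) \<noteq> (0, 0) \<longrightarrow>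
            quot_rank K (pencil l1 l2 C1 C2) = Max {quot_rank K (pencil m1 m2 C1 C2) | m1 m2. True})
       \<longleftrightarrow>
         (\<forall>l1 l2 m1 m2. (l1, l2) \<noteq> (0, 0) \<longrightarrow> (m1, m2) \<noteq> (0, 0) \<longrightarrow>
            d_dim K (pencil l1 l2 C1 C2) = d_dim K (pencil m1 m2 C1 C2))"
proof -
  define r where "r = (\<lambda>l1 l2. d_dim K (pencil l1 l2 C1 C2))"
  have qr: "quot_rank K (pencil l1 l2 C1 C2) = r l1 l2" for l1 l2
    unfolding r_def using quot_rank_eq[OF assms(4)] by simp
  have r0: "r 0 0 = 0" unfolding r_def by (rule d_dim_zero)
  have rb: "r l1 l2 \<le> CARD('n)" for l1 l2
    unfolding r_def d_dim_def using dim_subset_UNIV_cart_gen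
    by (meson diff_le_self le_trans)
  define S where "S = {r m1 m2 | m1 m2. True}"
  have finS: "finite S"
    by (rule finite_subset[of _ "{..CARD('n)}"]) (auto simp: S_def rb)
  have inS: "r a b \<in> S" for a b unfolding S_def by blast
  have Sne: "S \<noteq> {}" using inS by blast
  have maxge: "r a b \<le> Max S" for a b using finS inS by simp
  have lhs: "(\<forall>l1 l2. (l1, l2) \<noteq> (0, 0) \<longrightarrow> r l1 l2 = Max S) \<longleftrightarrow>
         (\<forall>l1 l2 m1 m2. (l1, l2) \<noteq> (0, 0) \<longrightarrow> (m1, m2) \<noteq> (0, 0) \<longrightarrow> r l1 l2 = r m1 m2)"
  proof
    assume "\<forall>l1 l2. (l1, l2) \<noteq> (0, 0) \<longrightarrow> r l1 l2 = Max S"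
    hence H: "\<And>l1 l2. (l1, l2) \<noteq> (0, 0) \<Longrightarrow> r l1 l2 = Max S" by blast
    show "\<forall>l1 l2 m1 m2. (l1, l2) \<noteq> (0, 0) \<longrightarrow> (m1, m2) \<noteq> (0, 0) \<longrightarrow> r l1 l2 = r m1 m2"
    proof (intro allI impI)
      fix l1 l2 m1 m2 :: complex assume a: "(l1, l2) \<noteq> (0, 0)" and b: "(m1, m2) \<noteq> (0, 0)"
      show "r l1 l2 = r m1 m2" using H[OF a] H[OF b] by simp
    qed
  next
    assume H: "\<forall>l1 l2 m1 m2. (l1, l2) \<noteq> (0, 0) \<longrightarrow> (m1, m2) \<noteq> (0, 0) \<longrightarrow> r l1 l2 = r m1 m2"
    show "\<forall>l1 l2. (l1, l2) \<noteq> (0, 0) \<longrightarrow> r l1 l2 = Max S"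
    proof (intro allI impI)
      fix l1 l2 assume nz: "(l1, l2) \<noteq> (0::complex, 0::complex)"
      have "Max S \<in> S" using finS Sne by simp
      then obtain a b where ab: "Max S = r a b" unfolding S_def by blast
      have "r a b \<le> r l1 l2"
      proof (cases "(a, b) = (0::complex, 0::complex)")
        case True thus ?thesis using r0 by simp
      next
        case False thus ?thesis using H[rule_format, OF False nz] by simp
      qed
      thus "r l1 l2 = Max S" using ab maxge[of l1 l2] by simp
    qed
  qed
  have eqS: "{quot_rank K (pencil m1 m2 C1 C2) | m1 m2. True} = S" unfolding S_def qr ..
  have rd: "d_dim K (pencil l1 l2 C1 C2) = r l1 l2" for l1 l2 unfolding r_def ..
  show ?thesis unfolding eqS qr rd using lhs unfolding S_def .
qed

end
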